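(* Let $a,b$ be coprime integers with $0<a\le b$ and let $a/b=[0,u_1,\dots,u_n]$ be a simple continued fraction expansion of odd depth $n=2i+1$ ($i\ge 0$), with convergents $p_k/q_k$. Let $D$ be the standard line $\{(x,y)\in\mathbb{Z}^2: 0\le ax-by<a+b\}$, let $U_1=(0,0)$ and $U_2=(b,a)$ (consecutive upper leaning points of $D$), let $L_1$ be the lower leaning point of $D$ with $0<x\le b$, and $L_2=L_1+(b,a)$. Then \[ \overrightarrow{U_1L_1}=(u_{2i+1}-1)(q_{2i},p_{2i})+(q_{2i-1},p_{2i-1})+(1,-1),\qquad \overrightarrow{L_1U_2}=(q_{2i}-1,\;p_{2i}+1). \] Moreover, the Freeman word of the DSS $[U_1L_1]$ has $E(z_{2i})^{u_{2i+1}-1}$ as a left factor (prefix), and the Freeman word of the DSS $[L_1U_2]$ has $E(z_{2i-1})^{u_{2i}}$ as a right factor (suffix).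
   Context: A standard line $\{\mu\le ax-by<\mu+|a|+|b|\}$ is a 4-connected path of lattice points; points with $ax-by=\mu$ are upper leaning points, those with $ax-by=\mu+|a|+|b|-1$ lower leaning points. For two points $P,Q$ of $D$, $[PQ]$ denotes the path of points of $D$ from $P$ to $Q$, and its Freeman word records its unit moves, with $0$ denoting the step $(1,0)$ and $1$ the step $(0,1)$. For $a/b=[0,u_1,\dots,u_n]$, the $k$-th convergent is $z_k=p_k/q_k=[0,u_1,\dots,u_k]$, with $(p_0,q_0)=(0,1)$, $(p_{-1},q_{-1})=(1,0)$, $u_0=0$ and $(p_k,q_k)=u_k(p_{k-1},q_{k-1})+(p_{k-2},q_{k-2})$. The words $E(z_k)$ are defined by $E(z_{-1})=1$, $E(z_0)=0$, $E(z_1)=0^{u_1}1$, $E(z_{2j+1})=E(z_{2j})^{u_{2j+1}}E(z_{2j-1})$ and $E(z_{2j})=E(z_{2j-2})E(z_{2j-1})^{u_{2j}}$; $E(z_n)$ is the pattern of slope $a/b$ (the Freeman word between consecutive upper leaning points). *)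

theory Defs
  imports Complex_Main
begin

fun cf_value :: "real list \<Rightarrow> real" where
  "cf_value [] = 0"
| "cf_value [x] = x"
| "cf_value (x # y # ys) = x + 1 / cf_value (y # ys)"

text \<open>Convergent numerators/denominators with shifted index: cf_pp u (k+1) = p_k, cf_qq u (k+1) = q_k.\<close>
fun cf_pp :: "(nat \<Rightarrow> nat) \<Rightarrow> nat \<Rightarrow> int" where
  "cf_pp u 0 = 1"
| "cf_pp u (Suc 0) = 0"
| "cf_pp u (Suc (Suc m)) = int (u (Suc m)) * cf_pp u (Suc m) + cf_pp u m"

fun cf_qq :: "(nat \<Rightarrow> nat) \<Rightarrow> nat \<Rightarrow> int" where
  "cf_qq u 0 = 0"
| "cf_qq u (Suc 0) = 1"
| "cf_qq u (Suc (Suc m)) = int (u (Suc m)) * cf_qq u (Suc m) + cf_qq u m"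

definition cf_p :: "(nat \<Rightarrow> nat) \<Rightarrow> int \<Rightarrow> int" where
  "cf_p u k = cf_pp u (nat (k + 1))"

definition cf_q :: "(nat \<Rightarrow> nat) \<Rightarrow> int \<Rightarrow> int" where
  "cf_q u k = cf_qq u (nat (k + 1))"

text \<open>Words E(z_k) with shifted index: cf_EE u (k+1) = E(z_k). Letters 0 and 1 are naturals.\<close>
fun cf_EE :: "(nat \<Rightarrow> nat) \<Rightarrow> nat \<Rightarrow> nat list" where
  "cf_EE u 0 = [1]"
| "cf_EE u (Suc 0) = [0]"
| "cf_EE u (Suc (Suc 0)) = replicate (u 1) 0 @ [1]"
| "cf_EE u (Suc (Suc (Suc m))) =
     (if odd (Suc (Suc m))
      then concat (replicate (u (Suc (Suc m))) (cf_EE u (Suc (Suc m)))) @ cf_EE u (Suc m)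
      else cf_EE u (Suc m) @ concat (replicate (u (Suc (Suc m))) (cf_EE u (Suc (Suc m)))))"

definition cf_E :: "(nat \<Rightarrow> nat) \<Rightarrow> int \<Rightarrow> nat list" where
  "cf_E u k = cf_EE u (nat (k + 1))"

definition standard_line :: "int \<Rightarrow> int \<Rightarrow> int \<Rightarrow> (int \<times> int) set" where
  "standard_line a b \<mu> = {(x, y). \<mu> \<le> a * x - b * y \<and> a * x - b * y < \<mu> + \<bar>a\<bar> + \<bar>b\<bar>}"

definition freeman_step :: "nat \<Rightarrow> int \<times> int" where
  "freeman_step c = (if c = 0 then (1, 0) else (0, 1))"

fun freeman_walk :: "int \<times> int \<Rightarrow> nat list \<Rightarrow> (int \<times> int) list" where
  "freeman_walk P [] = [P]"
| "freeman_walk P (c # w) = P # freeman_walk (fst P + fst (freeman_step c), snd P + snd (freeman_step c)) w"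

definition freeman_word :: "(int \<times> int) set \<Rightarrow> int \<times> int \<Rightarrow> int \<times> int \<Rightarrow> nat list" where
  "freeman_word D P Q = (THE w. set w \<subseteq> {0, 1} \<and> set (freeman_walk P w) \<subseteq> D
                              \<and> last (freeman_walk P w) = Q)"

end

theory Submission imports Defs begin


definition c0 :: "nat list \<Rightarrow> int" where "c0 w = int (length (filter (\<lambda>c. c = 0) w))"
definition c1 :: "nat list \<Rightarrow> int" where "c1 w = int (length (filter (\<lambda>c. c \<noteq> 0) w))"

lemma c0_simps[simp]: "c0 [] = 0" "c0 (c#w) = (if c = 0 then 1 else 0) + c0 w" "c0 (v @ w) = c0 v + c0 w"
  by (auto simp: c0_def)
lemma c1_simps[simp]: "c1 [] = 0" "c1 (c#w) = (if c = 0 then 0 else 1) + c1 w" "c1 (v @ w) = c1 v + c1 w"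
  by (auto simp: c1_def)
lemma len_c: "int (length w) = c0 w + c1 w" by (induct w) auto
lemma c_nonneg[simp]: "0 \<le> c0 w" "0 \<le> c1 w" by (auto simp: c0_def c1_def)

definition valid :: "nat list \<Rightarrow> int \<Rightarrow> int \<Rightarrow> bool" where
 "valid W p q \<longleftrightarrow> c0 W = q \<and> c1 W = p \<and> (\<forall>j \<le> length W. 0 \<le> p * c0 (take j W) - q * c1 (take j W)
     \<and> p * c0 (take j W) - q * c1 (take j W) < p + q)"

lemma arith_key:
  fixes s S h h1 c :: int
  assumes e: "s*h = S*h1 + c" and "0 \<le> h1" "h1 < s" "0 \<le> c" "c \<le> s" "s < S" "0 < s"
  shows "0 \<le> h \<and> h < S"
proof -
  have "S*h1 \<le> S*(s-1)" using assms by (intro mult_left_mono) auto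
  hence "s*h < s*S" using assms by (simp add: algebra_simps)
  hence 1: "h < S" using mult_less_cancel_left_pos[of s h S] \<open>0 < s\<close> by simp
  have "0 \<le> S*h1" using assms by simp
  hence "0 \<le> s*h" using assms by simp
  hence "0 \<le> h" using \<open>0 < s\<close> by (simp add: zero_le_mult_iff)
  with 1 show ?thesis by simp
qed

lemma valid_append:
  assumes v1: "valid W1 p1 q1" and v2: "valid W2 p2 q2" and det: "q1*p2 - p1*q2 = 1"
    and pos: "0 < p1+q1" "0 < p2+q2"
  shows "valid (W1@W2) (p1+p2) (q1+q2)"
proof -
  define P Q where "P = p1+p2" and "Q = q1+q2"
  have cnt: "c0 W1 = q1" "c1 W1 = p1" "c0 W2 = q2" "c1 W2 = p2" using v1 v2 by (auto simp: valid_def)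
  have L1: "int (length W1) = p1 + q1" using len_c[of W1] cnt by simp
  have L2: "int (length W2) = p2 + q2" using len_c[of W2] cnt by simp
  have main: "0 \<le> P * c0 (take j (W1@W2)) - Q * c1 (take j (W1@W2)) \<and>
              P * c0 (take j (W1@W2)) - Q * c1 (take j (W1@W2)) < P + Q"
    if j: "j \<le> length (W1@W2)" for j
  proof (cases "j \<le> length W1")
    case True
    define x y where "x = c0 (take j W1)" and "y = c1 (take j W1)"
    have tk: "take j (W1@W2) = take j W1" using True by simp
    have h1: "0 \<le> p1*x - q1*y" "p1*x - q1*y < p1+q1" using v1 True unfolding valid_def x_def y_def by auto
    have jj: "x + y = int j" using len_c[of "take j W1"] True by (auto simp: x_def y_def split: if_splits)
    have "(p1+q1)*(P*x - Q*y) = (P+Q)*(p1*x - q1*y) + (x+y)*(q1*p2 - p1*q2)"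
      unfolding P_def Q_def by algebra
    hence e: "(p1+q1)*(P*x - Q*y) = (P+Q)*(p1*x - q1*y) + (x+y)" using det by simp
    have "x + y \<le> p1 + q1" using jj True L1 by simp
    moreover have "0 \<le> x + y" using jj by simp
    ultimately have "0 \<le> P*x - Q*y \<and> P*x - Q*y < P + Q"
      using arith_key[OF e] h1 pos unfolding P_def Q_def by simp
    then show ?thesis unfolding tk x_def y_def by simp
  next
    case False
    define j' where "j' = j - length W1"
    define x y where "x = c0 (take j' W2)" and "y = c1 (take j' W2)"
    have tk: "take j (W1@W2) = W1 @ take j' W2" using False by (simp add: j'_def)
    have j'le: "j' \<le> length W2" using j False by (simp add: j'_def)
    have h2: "0 \<le> p2*x - q2*y" "p2*x - q2*y < p2+q2" using v2 j'le unfolding valid_def x_def y_def by auto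
    have jj: "x + y = int j'" using len_c[of "take j' W2"] j'le by (auto simp: x_def y_def split: if_splits)
    have "(p2+q2)*(P*(q1+x) - Q*(p1+y)) = (P+Q)*(p2*x - q2*y) + (p2+q2)*(q1*p2 - p1*q2) - (x+y)*(q1*p2 - p1*q2)"
      unfolding P_def Q_def by algebra
    hence e: "(p2+q2)*(P*(q1+x) - Q*(p1+y)) = (P+Q)*(p2*x - q2*y) + ((p2+q2) - (x+y))" using det by simp
    have "x + y \<le> p2 + q2" using jj j'le L2 by simp
    moreover have "0 \<le> x + y" using jj by simp
    ultimately have "0 \<le> P*(q1+x) - Q*(p1+y) \<and> P*(q1+x) - Q*(p1+y) < P + Q"
      using arith_key[OF e] h2 pos unfolding P_def Q_def by simp
    then show ?thesis unfolding tk x_def y_def using cnt by simp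
  qed
  show ?thesis unfolding valid_def using main cnt unfolding P_def Q_def by simp
qed

lemma concat_rep_comm: "concat (replicate k x) @ x = x @ concat (replicate k x)"
  by (induct k) auto

lemma valid_pow_left:
  assumes vE: "valid E p q" and vX: "valid X p' q'" and det: "q*p' - p*q' = 1"
    and nn: "0 \<le> p" "0 \<le> q" "0 \<le> p'" "0 \<le> q'" and pos: "0 < p+q" "0 < p'+q'"
  shows "valid (concat (replicate m E) @ X) (int m*p+p') (int m*q+q')"
proof (induct m)
  case 0 then show ?case using vX by simp
next
  case (Suc m)
  have "valid (E @ (concat (replicate m E) @ X)) (p + (int m*p+p')) (q + (int m*q+q'))"
  proof (rule valid_append[OF vE Suc])
    show "q * (int m * p + p') - p * (int m * q + q') = 1" using det by (simp add: algebra_simps)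
    show "0 < p + q" by (fact pos)
    have "0 \<le> int m * p" "0 \<le> int m * q" using nn by auto
    then show "0 < int m * p + p' + (int m * q + q')" using pos by simp
  qed
  then show ?case by (simp add: algebra_simps)
qed

lemma valid_pow_right:
  assumes vE: "valid E p q" and vX: "valid X p' q'" and det: "q'*p - p'*q = 1"
    and nn: "0 \<le> p" "0 \<le> q" "0 \<le> p'" "0 \<le> q'" and pos: "0 < p+q" "0 < p'+q'"
  shows "valid (X @ concat (replicate m E)) (p' + int m*p) (q' + int m*q)"
proof (induct m)
  case 0 then show ?case using vX by simp
next
  case (Suc m)
  have "valid ((X @ concat (replicate m E)) @ E) ((p' + int m*p) + p) ((q' + int m*q) + q)"
  proof (rule valid_append[OF Suc vE])
    show "(q' + int m * q) * p - (p' + int m * p) * q = 1" using det by (simp add: algebra_simps)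
    show "0 < p + q" by (fact pos)
    have "0 \<le> int m * p" "0 \<le> int m * q" using nn by auto
    then show "0 < p' + int m * p + (q' + int m * q)" using pos by simp
  qed
  moreover have "X @ concat (replicate (Suc m) E) = (X @ concat (replicate m E)) @ E"
    using concat_rep_comm[of m E] by simp
  ultimately show ?case by (simp add: algebra_simps)
qed

lemma pp_nn: "0 \<le> cf_pp u t" by (induct u t rule: cf_pp.induct) auto
lemma qq_nn: "0 \<le> cf_qq u t" by (induct u t rule: cf_qq.induct) auto
lemma pq_pos: "0 < cf_pp u t + cf_qq u t"
proof (induct t rule: nat_less_induct)
  case (1 t)
  show ?case
  proof (cases t)
    case 0 then show ?thesis by simp
  next
    case (Suc m) note tm = this
    show ?thesis
    proof (cases m)
      case 0 then show ?thesis using tm by simp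
    next
      case (Suc k)
      have "0 \<le> int (u (Suc k)) * (cf_pp u (Suc k) + cf_qq u (Suc k))"
        using pp_nn[of u "Suc k"] qq_nn[of u "Suc k"] by simp
      moreover have "0 < cf_pp u k + cf_qq u k" using 1 tm Suc by simp
      ultimately show ?thesis using tm Suc by (simp add: algebra_simps)
    qed
  qed
qed

lemma det_pq: "cf_pp u (Suc m) * cf_qq u m - cf_pp u m * cf_qq u (Suc m) = (-1)^(Suc m)"
proof (induct m)
  case 0 then show ?case by simp
next
  case (Suc m)
  have "cf_pp u (Suc (Suc m)) * cf_qq u (Suc m) - cf_pp u (Suc m) * cf_qq u (Suc (Suc m))
      = -(cf_pp u (Suc m) * cf_qq u m - cf_pp u m * cf_qq u (Suc m))"
    by (simp add: algebra_simps)
  then show ?case using Suc by simp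
qed

lemma concat_rep0: "concat (replicate k [0::nat]) = replicate k 0" by (induct k) auto

lemma valid_EE: "valid (cf_EE u t) (cf_pp u t) (cf_qq u t) \<and> valid (cf_EE u (Suc t)) (cf_pp u (Suc t)) (cf_qq u (Suc t))"
proof (induct t)
  case 0
  have a: "valid [1] 1 0" unfolding valid_def by (auto simp: le_Suc_eq)
  have b: "valid [0] 0 1" unfolding valid_def by (auto simp: le_Suc_eq)
  show ?case using a b by simp
next
  case (Suc t)
  have v1: "valid (cf_EE u (Suc t)) (cf_pp u (Suc t)) (cf_qq u (Suc t))" using Suc by simp
  have v0: "valid (cf_EE u t) (cf_pp u t) (cf_qq u t)" using Suc by simp
  have "valid (cf_EE u (Suc (Suc t))) (cf_pp u (Suc (Suc t))) (cf_qq u (Suc (Suc t)))"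
  proof (cases t)
    case 0
    have a: "valid [1] 1 0" unfolding valid_def by (auto simp: le_Suc_eq)
    have b: "valid [0] 0 1" unfolding valid_def by (auto simp: le_Suc_eq)
    have "valid (concat (replicate (u 1) [0]) @ [1]) (int (u 1)*0+1) (int (u 1)*1+0)"
      by (rule valid_pow_left[OF b a]) auto
    then show ?thesis using 0 by (simp add: concat_rep0)
  next
    case (Suc m)
    have d: "cf_pp u (Suc (Suc m)) * cf_qq u (Suc m) - cf_pp u (Suc m) * cf_qq u (Suc (Suc m)) = (-1)^(Suc (Suc m))"
      by (rule det_pq)
    have vA: "valid (cf_EE u (Suc (Suc m))) (cf_pp u (Suc (Suc m))) (cf_qq u (Suc (Suc m)))" using v1 Suc by simp
    have vB: "valid (cf_EE u (Suc m)) (cf_pp u (Suc m)) (cf_qq u (Suc m))" using v0 Suc by simp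
    show ?thesis
    proof (cases "odd (Suc (Suc m))")
      case True
      hence "(-1::int)^(Suc (Suc m)) = -1" by simp
      hence det: "cf_qq u (Suc (Suc m)) * cf_pp u (Suc m) - cf_pp u (Suc (Suc m)) * cf_qq u (Suc m) = 1"
        using d by (simp add: algebra_simps)
      have "valid (concat (replicate (u (Suc (Suc m))) (cf_EE u (Suc (Suc m)))) @ cf_EE u (Suc m))
         (int (u (Suc (Suc m))) * cf_pp u (Suc (Suc m)) + cf_pp u (Suc m))
         (int (u (Suc (Suc m))) * cf_qq u (Suc (Suc m)) + cf_qq u (Suc m))"
        by (rule valid_pow_left[OF vA vB det pp_nn qq_nn pp_nn qq_nn pq_pos pq_pos])
      then show ?thesis using Suc True by simp
    next
      case False
      hence "(-1::int)^(Suc (Suc m)) = 1" by simp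
      hence det: "cf_qq u (Suc m) * cf_pp u (Suc (Suc m)) - cf_pp u (Suc m) * cf_qq u (Suc (Suc m)) = 1"
        using d by (simp add: algebra_simps)
      have "valid (cf_EE u (Suc m) @ concat (replicate (u (Suc (Suc m))) (cf_EE u (Suc (Suc m)))))
         (cf_pp u (Suc m) + int (u (Suc (Suc m))) * cf_pp u (Suc (Suc m)))
         (cf_qq u (Suc m) + int (u (Suc (Suc m))) * cf_qq u (Suc (Suc m)))"
        by (rule valid_pow_right[OF vA vB det pp_nn qq_nn pp_nn qq_nn pq_pos pq_pos])
      then show ?thesis using Suc False by (simp add: algebra_simps)
    qed
  qed
  then show ?case using v1 by simp
qed

lemma EE_set: "set (cf_EE u t) \<subseteq> {0,1}"
  by (induct u t rule: cf_EE.induct) auto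



lemma step_simps[simp]: "fst (freeman_step c) = (if c = 0 then 1 else 0)" "snd (freeman_step c) = (if c = 0 then 0 else 1)"
  by (auto simp: freeman_step_def)

lemma walk_ne: "freeman_walk P w \<noteq> []" by (cases w) auto
lemma walk_hd: "P \<in> set (freeman_walk P w)" by (cases w) auto

lemma walk_last: "last (freeman_walk P w) = (fst P + c0 w, snd P + c1 w)"
  by (induct w arbitrary: P) (auto simp: walk_ne)

lemma walk_set: "x \<in> set (freeman_walk P w) \<longleftrightarrow>
   (\<exists>j \<le> length w. x = (fst P + c0 (take j w), snd P + c1 (take j w)))"
proof (induct w arbitrary: P)
  case Nil then show ?case by simp
next
  case (Cons c w)
  define P' where "P' = (fst P + fst (freeman_step c), snd P + snd (freeman_step c))"
  have s: "set (freeman_walk P (c#w)) = insert P (set (freeman_walk P' w))" by (simp add: P'_def)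
  show ?case
  proof
    assume "x \<in> set (freeman_walk P (c#w))"
    then consider "x = P" | "x \<in> set (freeman_walk P' w)" using s by auto
    then show "\<exists>j \<le> length (c#w). x = (fst P + c0 (take j (c#w)), snd P + c1 (take j (c#w)))"
    proof cases
      case 1 then show ?thesis by (intro exI[of _ 0]) auto
    next
      case 2
      then obtain j where "j \<le> length w" "x = (fst P' + c0 (take j w), snd P' + c1 (take j w))"
        using Cons by blast
      then show ?thesis by (intro exI[of _ "Suc j"]) (auto simp: P'_def)
    qed
  next
    assume "\<exists>j \<le> length (c#w). x = (fst P + c0 (take j (c#w)), snd P + c1 (take j (c#w)))"
    then obtain j where j: "j \<le> length (c#w)" "x = (fst P + c0 (take j (c#w)), snd P + c1 (take j (c#w)))" by blast
    show "x \<in> set (freeman_walk P (c#w))"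
    proof (cases j)
      case 0 then show ?thesis using j by simp
    next
      case (Suc j')
      have "x = (fst P' + c0 (take j' w), snd P' + c1 (take j' w))" using j Suc by (auto simp: P'_def)
      hence "x \<in> set (freeman_walk P' w)" using Cons j Suc by auto
      then show ?thesis using s by auto
    qed
  qed
qed

lemma D_mem: "0 < a \<Longrightarrow> 0 < b \<Longrightarrow> (x,y) \<in> standard_line a b 0 \<longleftrightarrow> 0 \<le> a*x - b*y \<and> a*x - b*y < a + b"
  by (simp add: standard_line_def)

lemma D_sum_unique:
  assumes "0 < a" "0 < b" "(x1,y1) \<in> standard_line a b 0" "(x2,y2) \<in> standard_line a b 0" "x1 + y1 = x2 + y2"
  shows "x1 = x2 \<and> y1 = y2"
proof -
  have r: "0 \<le> a*x1 - b*y1" "a*x1 - b*y1 < a + b" "0 \<le> a*x2 - b*y2" "a*x2 - b*y2 < a + b"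
    using assms by (auto simp: D_mem)
  have y2: "y2 = x1 + y1 - x2" using assms by simp
  have e: "(a*x1 - b*y1) - (a*x2 - b*y2) = (a+b)*(x1 - x2)" unfolding y2 by (simp add: algebra_simps)
  have "x1 = x2"
  proof (rule ccontr)
    assume "x1 \<noteq> x2"
    hence "x1 - x2 \<ge> 1 \<or> x1 - x2 \<le> -1" by auto
    then show False
    proof
      assume "x1 - x2 \<ge> 1"
      hence "(a+b)*(x1-x2) \<ge> (a+b)*1" using assms by (intro mult_left_mono) auto
      hence "(a+b)*(x1-x2) \<ge> (a+b)" by simp
      then show False using e r by linarith
    next
      assume "x1 - x2 \<le> -1"
      hence "(a+b)*(x1-x2) \<le> (a+b)*(-1)" using assms by (intro mult_left_mono) auto
      hence "(a+b)*(x1-x2) \<le> -(a+b)" by simp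
      then show False using e r by linarith
    qed
  qed
  then show ?thesis using assms by simp
qed

lemma word_unique:
  assumes ab: "0 < a" "0 < b"
  shows "set w1 \<subseteq> {0,1} \<Longrightarrow> set w2 \<subseteq> {0,1} \<Longrightarrow> set (freeman_walk P w1) \<subseteq> standard_line a b 0
   \<Longrightarrow> set (freeman_walk P w2) \<subseteq> standard_line a b 0
   \<Longrightarrow> last (freeman_walk P w1) = last (freeman_walk P w2) \<Longrightarrow> w1 = w2"
proof (induct w1 arbitrary: P w2)
  case Nil
  have "c0 w2 + c1 w2 = 0" using Nil(5) by (cases P) (simp add: walk_last)
  hence "length w2 = 0" using len_c[of w2] by simp
  then show ?case by simp
next
  case (Cons c w1)
  have "c0 (c#w1) + c1 (c#w1) = c0 w2 + c1 w2" using Cons(6) unfolding walk_last by (cases P) simp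
  hence "length w2 = length (c#w1)" using len_c[of w2] len_c[of "c#w1"] by linarith
  then obtain d w2' where w2: "w2 = d # w2'" by (cases w2) auto
  define Pc where "Pc = (fst P + fst (freeman_step c), snd P + snd (freeman_step c))"
  define Pd where "Pd = (fst P + fst (freeman_step d), snd P + snd (freeman_step d))"
  have inP: "P \<in> standard_line a b 0" using Cons(4) by (auto simp: walk_hd)
  have inPc: "Pc \<in> standard_line a b 0" using Cons(4) walk_hd[of Pc w1] by (auto simp: Pc_def)
  have inPd: "Pd \<in> standard_line a b 0" using Cons(5) walk_hd[of Pd w2'] w2 by (auto simp: Pd_def)
  have cd: "c = d"
  proof (rule ccontr)
    assume "c \<noteq> d"
    moreover have "c \<in> {0,1}" "d \<in> {0,1}" using Cons(2,3) w2 by auto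
    ultimately have "(c = 0 \<and> d = 1) \<or> (c = 1 \<and> d = 0)" by auto
    then have "(fst P + 1, snd P) \<in> standard_line a b 0 \<and> (fst P, snd P + 1) \<in> standard_line a b 0"
      using inPc inPd by (auto simp: Pc_def Pd_def)
    then show False using inP ab by (cases P) (auto simp: D_mem algebra_simps)
  qed
  have "w1 = w2'"
    apply (rule Cons(1)[where P=Pc])
    using Cons(2-6) w2 cd by (auto simp: Pc_def walk_ne)
  then show ?case using w2 cd by simp
qed

lemma fw_eq:
  assumes "0 < a" "0 < b" "set w \<subseteq> {0,1}" "set (freeman_walk P w) \<subseteq> standard_line a b 0"
    "last (freeman_walk P w) = Q"
  shows "freeman_word (standard_line a b 0) P Q = w"
  unfolding freeman_word_def
  apply (rule the_equality)
  using assms apply blast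
  using word_unique[OF assms(1,2)] assms by metis

lemma cf_cons: "l \<noteq> [] \<Longrightarrow> cf_value (x # l) = x + 1 / cf_value l" by (cases l) auto

lemma cf_snoc2: "cf_value (xs @ [x, y]) = cf_value (xs @ [x + 1/y])"
proof (induct xs)
  case Nil then show ?case by simp
next
  case (Cons z xs) then show ?case by (simp add: cf_cons)
qed

lemma cf_conv:
  assumes u0: "u 0 = 0"
  shows "y > 0 \<Longrightarrow> cf_value (map (\<lambda>k. real (u k)) [0..<Suc k] @ [y]) =
     (y * of_int (cf_pp u (Suc k)) + of_int (cf_pp u k)) / (y * of_int (cf_qq u (Suc k)) + of_int (cf_qq u k))"
proof (induct k arbitrary: y)
  case 0 then show ?case using u0 by simp
next
  case (Suc k)
  define y' where "y' = real (u (Suc k)) + 1/y"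
  have y'p: "y' > 0" using Suc(2) by (simp add: y'_def add_nonneg_pos)
  have me: "map (\<lambda>k. real (u k)) [0..<Suc (Suc k)] @ [y] = map (\<lambda>k. real (u k)) [0..<Suc k] @ [real (u (Suc k)), y]"
    by simp
  have "cf_value (map (\<lambda>k. real (u k)) [0..<Suc (Suc k)] @ [y]) = cf_value (map (\<lambda>k. real (u k)) [0..<Suc k] @ [y'])"
    by (simp only: me cf_snoc2 y'_def)
  also have "\<dots> = (y' * of_int (cf_pp u (Suc k)) + of_int (cf_pp u k)) / (y' * of_int (cf_qq u (Suc k)) + of_int (cf_qq u k))"
    using Suc(1)[OF y'p] .
  also have "\<dots> = (y * (y' * of_int (cf_pp u (Suc k)) + of_int (cf_pp u k))) / (y * (y' * of_int (cf_qq u (Suc k)) + of_int (cf_qq u k)))"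
    using Suc(2) by simp
  also have "\<dots> = (y * of_int (cf_pp u (Suc (Suc k))) + of_int (cf_pp u (Suc k))) / (y * of_int (cf_qq u (Suc (Suc k))) + of_int (cf_qq u (Suc k)))"
    using Suc(2) by (simp add: y'_def algebra_simps)
  finally show ?case .
qed

lemma qq_ge1: "(\<And>k. 1 \<le> k \<Longrightarrow> k \<le> m \<Longrightarrow> 1 \<le> u k) \<Longrightarrow> 1 \<le> cf_qq u (Suc m)"
proof (induct m)
  case 0 then show ?case by simp
next
  case (Suc m)
  have "1 \<le> cf_qq u (Suc m)" using Suc by simp
  moreover have "1 \<le> u (Suc m)" using Suc(2) by simp
  ultimately have h: "cf_qq u (Suc m) \<le> int (u (Suc m)) * cf_qq u (Suc m)"
    by (simp add: mult_le_cancel_right1)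
  have "1 \<le> int (u (Suc m)) * cf_qq u (Suc m) + cf_qq u m"
    using h qq_nn[of u m] \<open>1 \<le> cf_qq u (Suc m)\<close> by linarith
  then show ?case by simp
qed



theorem proposition1:
  fixes a b :: int and u :: "nat \<Rightarrow> nat" and i :: nat and L1 L2 :: "int \<times> int"
  assumes "coprime a b" and "0 < a" and "a \<le> b"
    and "u 0 = 0"
    and "\<And>k. 1 \<le> k \<Longrightarrow> k \<le> 2 * i + 1 \<Longrightarrow> 1 \<le> u k"
    and "real_of_int a / real_of_int b = cf_value (map (\<lambda>k. real (u k)) [0..<2 * i + 2])"
    and "L1 \<in> standard_line a b 0"
    and "a * fst L1 - b * snd L1 = a + b - 1"
    and "0 < fst L1" and "fst L1 \<le> b"
    and "L2 = (fst L1 + b, snd L1 + a)"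
  shows "(fst L1 - 0, snd L1 - 0) =
           ((int (u (2 * i + 1)) - 1) * cf_q u (2 * int i) + cf_q u (2 * int i - 1) + 1,
            (int (u (2 * i + 1)) - 1) * cf_p u (2 * int i) + cf_p u (2 * int i - 1) - 1)
    \<and> (b - fst L1, a - snd L1) = (cf_q u (2 * int i) - 1, cf_p u (2 * int i) + 1)
    \<and> (\<exists>v. freeman_word (standard_line a b 0) (0, 0) L1
               = concat (replicate (u (2 * i + 1) - 1) (cf_E u (2 * int i))) @ v)
    \<and> (\<exists>v. freeman_word (standard_line a b 0) L1 (b, a)
               = v @ concat (replicate (u (2 * i)) (cf_E u (2 * int i - 1))))"
proof -
  note cop = assms(1) and apos = assms(2) and ab = assms(3) and u0 = assms(4) and upos = assms(5)
    and val = assms(6) and L1D = assms(7) and L1eq = assms(8) and L1x = assms(9) assms(10)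
  define m where "m = 2*i"
  have bpos: "0 < b" using apos ab by simp
  have nm: "2*i+1 = Suc m" "2*i+2 = Suc (Suc m)" "2*i = m" by (simp_all add: m_def)
  have natm: "nat (2 * int i + 1) = Suc m" "nat (2 * int i - 1 + 1) = m" "nat (2 * int i) = m" by (simp_all add: m_def)
  define U where "U = u (Suc m)"
  define p where "p = cf_pp u (Suc m)"
  define q where "q = cf_qq u (Suc m)"
  define p' where "p' = cf_pp u m"
  define q' where "q' = cf_qq u m"
  define P2 where "P2 = cf_pp u (Suc (Suc m))"
  define Q2 where "Q2 = cf_qq u (Suc (Suc m))"
  have P2r: "P2 = int U * p + p'" and Q2r: "Q2 = int U * q + q'"
    by (simp_all add: P2_def Q2_def U_def p_def q_def p'_def q'_def)
  have U1: "1 \<le> U" using upos[of "Suc m"] by (simp add: U_def m_def)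
  have q1: "1 \<le> q" unfolding q_def by (rule qq_ge1) (use upos m_def in auto)
  have Q21: "1 \<le> Q2" unfolding Q2_def by (rule qq_ge1) (use upos m_def in auto)
  have nn: "0 \<le> p" "0 \<le> p'" "0 \<le> q'" using pp_nn qq_nn by (auto simp: p_def p'_def q'_def)
  have "[0..<2*i+2] = [0..<Suc m] @ [Suc m]" by (simp add: m_def)
  hence "cf_value (map (\<lambda>k. real (u k)) [0..<2 * i + 2]) = cf_value (map (\<lambda>k. real (u k)) [0..<Suc m] @ [real U])"
    by (simp add: U_def)
  also have "\<dots> = (real U * of_int p + of_int p') / (real U * of_int q + of_int q')"
    unfolding p_def q_def p'_def q'_def by (rule cf_conv[of u, OF u0]) (use U1 in simp)
  also have "\<dots> = real_of_int P2 / real_of_int Q2" by (simp add: P2r Q2r)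
  finally have "real_of_int a / real_of_int b = real_of_int P2 / real_of_int Q2" using val by simp
  hence "real_of_int (a*Q2) = real_of_int (b*P2)" using bpos Q21 by (simp add: field_simps)
  hence aQ: "a*Q2 = b*P2" by (simp only: of_int_eq_iff)
  have "cf_pp u (Suc (Suc m)) * cf_qq u (Suc m) - cf_pp u (Suc m) * cf_qq u (Suc (Suc m)) = (-1)^(Suc (Suc m))"
    by (rule det_pq)
  hence det: "P2 * q - p * Q2 = 1" by (simp add: P2_def Q2_def p_def q_def m_def)
  have "a dvd b * P2" by (simp add: aQ[symmetric])
  hence "a dvd P2" using coprime_dvd_mult_right_iff[OF cop] by simp
  then obtain k where k: "P2 = a * k" by (auto elim: dvdE)
  have "a * Q2 = a * (b * k)" using aQ k by simp
  hence Qk: "Q2 = b * k" using apos by simp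
  have "0 < b * k" using Qk Q21 by simp
  hence kpos: "0 < k" using bpos zero_less_mult_iff[of b k] by auto
  have "k * (a * q - p * b) = 1" using det k Qk by (simp add: algebra_simps)
  hence "k = 1" using pos_zmult_eq_1_iff[OF kpos] by simp
  hence aP: "a = P2" and bQ: "b = Q2" using k Qk by simp_all
  have detab: "a * q - b * p = 1" using det aP bQ by (simp add: algebra_simps)
  have "q \<le> int U * q" using U1 q1 by (simp add: mult_le_cancel_right1)
  hence qb: "q \<le> b" using bQ Q2r nn by linarith
  have "p \<le> int U * p" using U1 nn by (simp add: mult_le_cancel_right1)
  hence pa: "p \<le> a" using aP P2r nn by linarith
  obtain x1 y1 where L1xy: "L1 = (x1, y1)" by (cases L1)
  define x2 y2 where "x2 = b - q + 1" and "y2 = a - p - 1"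
  have e1: "a*x1 - b*y1 = a + b - 1" using L1eq L1xy by simp
  have e2: "a*x2 - b*y2 = a + b - 1" using detab unfolding x2_def y2_def by (simp add: algebra_simps)
  have ad: "a * (x1 - x2) = b * (y1 - y2)" using e1 e2 by (simp add: algebra_simps)
  have "b dvd a * (x1 - x2)" using ad by simp
  moreover have "coprime b a" using cop by (simp add: coprime_commute)
  ultimately have bd: "b dvd (x1 - x2)" using coprime_dvd_mult_right_iff by blast
  have xeq: "x1 = x2"
  proof (rule ccontr)
    assume "x1 \<noteq> x2"
    hence "\<bar>b\<bar> \<le> \<bar>x1 - x2\<bar>" using dvd_imp_le_int bd by auto
    moreover have "0 < x1" "x1 \<le> b" using L1x L1xy by auto
    moreover have "0 < x2" "x2 \<le> b" using q1 qb x2_def by auto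
    ultimately show False by linarith
  qed
  hence "b * (y1 - y2) = 0" using ad by simp
  hence yeq: "y1 = y2" using bpos by simp
  have L1v: "L1 = (b - q + 1, a - p - 1)" using L1xy xeq yeq x2_def y2_def by simp
  have cq: "cf_q u (2 * int i) = q" "cf_q u (2 * int i - 1) = q'" "cf_p u (2 * int i) = p" "cf_p u (2 * int i - 1) = p'"
    by (simp_all add: cf_q_def cf_p_def natm q_def q'_def p_def p'_def)
  have C1: "(fst L1 - 0, snd L1 - 0) =
           ((int (u (2 * i + 1)) - 1) * cf_q u (2 * int i) + cf_q u (2 * int i - 1) + 1,
            (int (u (2 * i + 1)) - 1) * cf_p u (2 * int i) + cf_p u (2 * int i - 1) - 1)"
    unfolding cq nm L1v using aP bQ P2r Q2r by (simp add: U_def algebra_simps)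
  have C2: "(b - fst L1, a - snd L1) = (cf_q u (2 * int i) - 1, cf_p u (2 * int i) + 1)"
    unfolding cq L1v by simp
  define W where "W = cf_EE u (Suc (Suc m))"
  define E where "E = cf_EE u (Suc m)"
  define E' where "E' = cf_EE u m"
  have vW: "valid W a b" using valid_EE[of u "Suc m"] aP bQ by (simp add: W_def P2_def Q2_def)
  have vE: "valid E p q" using valid_EE[of u m] by (simp add: E_def p_def q_def)
  have lenW: "int (length W) = a + b" using vW len_c[of W] by (simp add: valid_def)
  have lenE: "int (length E) = p + q" using vE len_c[of E] by (simp add: valid_def)
  have Wdec: "W = concat (replicate U E) @ E'"
  proof (cases i)
    case 0 then show ?thesis by (simp add: W_def E_def E'_def U_def m_def concat_rep0)
  next
    case (Suc i')
    have "Suc (Suc m) = Suc (Suc (Suc (Suc (2*i'))))" "odd (Suc (Suc (Suc (2*i'))))"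
      using Suc by (simp_all add: m_def)
    moreover have "Suc m = Suc (Suc (Suc (2*i')))" "m = Suc (Suc (2*i'))" using Suc by (simp_all add: m_def)
    ultimately show ?thesis unfolding W_def E_def E'_def U_def by simp
  qed
  define X where "X = concat (replicate (U - 1) E)"
  have WX: "W = X @ (E @ E')"
  proof -
    have "U = Suc (U - 1)" using U1 by simp
    hence "concat (replicate U E) = concat (replicate (U - 1) E) @ E"
      by (metis concat_rep_comm concat.simps(2) replicate_Suc)
    then show ?thesis using Wdec X_def by simp
  qed
  define N where "N = nat (fst L1 + snd L1)"
  have Nint: "int N = a + b - (p + q)" using L1v nn q1 qb pa unfolding N_def by simp
  have NW: "N \<le> length W" using Nint lenW nn q1 by simp
  have XN: "length X \<le> N" using Nint lenW lenE WX by simp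
  define D where "D = standard_line a b 0"
  have ptD: "(c0 (take j W), c1 (take j W)) \<in> D" if "j \<le> length W" for j
    using vW that apos bpos unfolding valid_def D_def by (simp add: D_mem)
  have setW: "set W \<subseteq> {0,1}" unfolding W_def by (rule EE_set)
  define T where "T = (c0 (take N W), c1 (take N W))"
  have TL: "T = L1"
  proof -
    have "T \<in> D" using ptD NW T_def by simp
    moreover have "c0 (take N W) + c1 (take N W) = int N" using len_c[of "take N W"] NW by simp
    moreover have "fst L1 + snd L1 = int N" using Nint L1v by simp
    ultimately show ?thesis using D_sum_unique[OF apos bpos, of "fst T" "snd T" "fst L1" "snd L1"] L1D
      unfolding D_def T_def by (cases L1) auto
  qed
  have fw1: "freeman_word D (0,0) L1 = take N W"
    unfolding D_def
  proof (rule fw_eq[OF apos bpos])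
    show "set (take N W) \<subseteq> {0,1}" using order_trans[OF set_take_subset setW] .
    show "set (freeman_walk (0, 0) (take N W)) \<subseteq> standard_line a b 0"
    proof
      fix x assume "x \<in> set (freeman_walk (0, 0) (take N W))"
      then obtain j where j: "j \<le> length (take N W)" "x = (c0 (take j (take N W)), c1 (take j (take N W)))"
        by (auto simp: walk_set)
      have "x = (c0 (take (min j N) W), c1 (take (min j N) W))" using j by (simp add: min.commute)
      moreover have "min j N \<le> length W" using NW by simp
      ultimately show "x \<in> standard_line a b 0" using ptD D_def by simp
    qed
    show "last (freeman_walk (0, 0) (take N W)) = L1" using TL T_def by (simp add: walk_last)
  qed
  have fw2: "freeman_word D L1 (b,a) = drop N W"
    unfolding D_def
  proof (rule fw_eq[OF apos bpos])
    show "set (drop N W) \<subseteq> {0,1}" using order_trans[OF set_drop_subset setW] .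
    show "set (freeman_walk L1 (drop N W)) \<subseteq> standard_line a b 0"
    proof
      fix x assume "x \<in> set (freeman_walk L1 (drop N W))"
      then obtain j where j: "j \<le> length (drop N W)" "x = (fst L1 + c0 (take j (drop N W)), snd L1 + c1 (take j (drop N W)))"
        by (auto simp: walk_set)
      have "x = (c0 (take (N + j) W), c1 (take (N + j) W))"
        using j TL[symmetric] unfolding T_def take_add by simp
      moreover have "N + j \<le> length W" using j NW by simp
      ultimately show "x \<in> standard_line a b 0" using ptD D_def by simp
    qed
    have "c0 W = b" "c1 W = a" using vW by (auto simp: valid_def)
    moreover have "c0 W = c0 (take N W) + c0 (drop N W)" "c1 W = c1 (take N W) + c1 (drop N W)"
      using append_take_drop_id[of N W] c0_simps(3) c1_simps(3) by metis+
    ultimately show "last (freeman_walk L1 (drop N W)) = (b, a)"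
      using TL T_def by (auto simp: walk_last)
  qed
  have C3: "\<exists>v. freeman_word D (0, 0) L1 = concat (replicate (u (2 * i + 1) - 1) (cf_E u (2 * int i))) @ v"
  proof -
    have "cf_E u (2 * int i) = E" by (simp add: cf_E_def natm E_def)
    hence "concat (replicate (u (2 * i + 1) - 1) (cf_E u (2 * int i))) = X"
      by (simp add: X_def U_def nm)
    moreover have "take N W = X @ take (N - length X) (E @ E')" using WX XN by simp
    ultimately show ?thesis using fw1 by auto
  qed
  have C4: "\<exists>v. freeman_word D L1 (b, a) = v @ concat (replicate (u (2 * i)) (cf_E u (2 * int i - 1)))"
  proof -
    have cE: "cf_E u (2 * int i - 1) = E'" by (simp add: cf_E_def natm E'_def)
    define Y where "Y = concat (replicate (u m) E')"
    show ?thesis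
    proof (cases i)
      case 0
      then show ?thesis using u0 by (simp add: fw2)
    next
      case (Suc i')
      have "Suc m = Suc (Suc (Suc (2*i')))" "m = Suc (Suc (2*i'))" "even (Suc (Suc (2*i')))"
        using Suc by (simp_all add: m_def)
      hence Edec: "E = cf_EE u (Suc (2*i')) @ Y" unfolding E_def Y_def E'_def by simp
      define S where "S = X @ cf_EE u (Suc (2*i')) @ E'"
      have WS: "W = S @ Y" unfolding S_def using WX Edec concat_rep_comm[of "u m" E'] Y_def by simp
      have "length Y \<le> length E" using Edec by simp
      hence "N \<le> length S" using WS Nint lenW lenE by simp
      hence "drop N W = drop N S @ Y" using WS by simp
      then show ?thesis using fw2 cE Y_def nm by auto
    qed
  qed
  show ?thesis using C1 C2 C3 C4 unfolding D_def by blast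
qed

end
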